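(* Let $q>2$, $n\ge 2$, and let $f:H(n,q)\to\mathbb{R}$ be an eigenfunction of $H(n,q)$ with eigenvalue $\lambda_1=n(q-1)-q$, i.e. $f\not\equiv0$ and $Af=\lambda_1 f$ where $A$ is the adjacency matrix of $H(n,q)$. Then $|S(f)|\ge 2(q-1)q^{n-2}$. Moreover, if $|S(f)|=2(q-1)q^{n-2}$, then there exist $i\ne j$ in $\{1,\dots,n\}$, $k,m\in\{0,\dots,q-1\}$ and a constant $c\ne0$ such that $f(x)=c$ for $x\in T_k(i,n)\setminus T_m(j,n)$, $f(x)=-c$ for $x\in T_m(j,n)\setminus T_k(i,n)$, and $f(x)=0$ otherwise.
   Context: The Hamming graph $H(n,q)$ has vertex set $\{0,1,\dots,q-1\}^n$, two words being adjacent iff they differ in exactly one coordinate; its adjacency eigenvalues are $\lambda_m=n(q-1)-qm$, $m=0,\dots,n$. For $f:H(n,q)\to\mathbb{R}$, its support is $S(f)=\{x: f(x)\ne 0\}$. $T_k(i,n)$ denotes the set of vertices of $H(n,q)$ whose $i$-th coordinate equals $k$. *)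

theory Defs
  imports "HOL-Analysis.Analysis"
begin

text \<open>Vertex set of the Hamming graph H(n,q): words of length n over {0,...,q-1},
  represented as functions nat => nat that are zero outside the coordinates {0..<n}
  (coordinates are indexed 0,...,n-1 instead of 1,...,n).\<close>
definition hamming_vertices :: "nat \<Rightarrow> nat \<Rightarrow> (nat \<Rightarrow> nat) set" where
  "hamming_vertices n q = {x. (\<forall>i<n. x i < q) \<and> (\<forall>i\<ge>n. x i = 0)}"

definition hamming_adj :: "nat \<Rightarrow> (nat \<Rightarrow> nat) \<Rightarrow> (nat \<Rightarrow> nat) \<Rightarrow> bool" where
  "hamming_adj n x y = (card {i\<in>{0..<n}. x i \<noteq> y i} = 1)"

definition hamming_adj_op :: "nat \<Rightarrow> nat \<Rightarrow> ((nat \<Rightarrow> nat) \<Rightarrow> real) \<Rightarrow> (nat \<Rightarrow> nat) \<Rightarrow> real" where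
  "hamming_adj_op n q f x = (\<Sum>y\<in>{y\<in>hamming_vertices n q. hamming_adj n x y}. f y)"

definition support_H :: "nat \<Rightarrow> nat \<Rightarrow> ((nat \<Rightarrow> nat) \<Rightarrow> real) \<Rightarrow> (nat \<Rightarrow> nat) set" where
  "support_H n q f = {x\<in>hamming_vertices n q. f x \<noteq> 0}"

definition T_set :: "nat \<Rightarrow> nat \<Rightarrow> nat \<Rightarrow> nat \<Rightarrow> (nat \<Rightarrow> nat) set" where
  "T_set q k i n = {x\<in>hamming_vertices n q. x i = k}"

end

theory Submission
  imports Defs
begin


lemma hv_mem: "x \<in> hamming_vertices n q \<longleftrightarrow> (\<forall>i<n. x i < q) \<and> (\<forall>i\<ge>n. x i = 0)"
  unfolding hamming_vertices_def by simp

lemma hv_0: "hamming_vertices 0 q = {\<lambda>_. 0}"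
  unfolding hamming_vertices_def by auto

lemma hv_upd: "y \<in> hamming_vertices n q \<Longrightarrow> a < q \<Longrightarrow> y(n:=a) \<in> hamming_vertices (Suc n) q"
  unfolding hv_mem by (auto simp: less_Suc_eq)

lemma hv_restrict: "x \<in> hamming_vertices (Suc n) q \<Longrightarrow> x(n:=0) \<in> hamming_vertices n q \<and> x n < q"
proof -
  assume x: "x \<in> hamming_vertices (Suc n) q"
  have "\<forall>i\<ge>n. (x(n:=0)) i = 0"
  proof (intro allI impI)
    fix i assume "n \<le> i"
    then show "(x(n:=0)) i = 0" using x unfolding hv_mem by (cases "i = n") auto
  qed
  then show ?thesis using x unfolding hv_mem by auto
qed

lemma hv_Suc: "hamming_vertices (Suc n) q = (\<lambda>(y,a). y(n:=a)) ` (hamming_vertices n q \<times> {..<q})"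
proof
  show "hamming_vertices (Suc n) q \<subseteq> (\<lambda>(y,a). y(n:=a)) ` (hamming_vertices n q \<times> {..<q})"
  proof
    fix x assume x: "x \<in> hamming_vertices (Suc n) q"
    have "x = (\<lambda>(y,a). y(n:=a)) (x(n:=0), x n)" by simp
    moreover have "(x(n:=0), x n) \<in> hamming_vertices n q \<times> {..<q}"
      using hv_restrict[OF x] by auto
    ultimately show "x \<in> (\<lambda>(y,a). y(n:=a)) ` (hamming_vertices n q \<times> {..<q})" by blast
  qed
  show "(\<lambda>(y,a). y(n:=a)) ` (hamming_vertices n q \<times> {..<q}) \<subseteq> hamming_vertices (Suc n) q"
    using hv_upd by auto
qed

lemma hv_inj: "inj_on (\<lambda>(y,a). y(n:=a)) (hamming_vertices n q \<times> UNIV)"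
proof (rule inj_onI, clarsimp)
  fix y a z b assume y: "y \<in> hamming_vertices n q" and z: "z \<in> hamming_vertices n q"
    and e: "y(n := a) = z(n := b)"
  have "a = b" using fun_cong[OF e, of n] by simp
  moreover have "y = z"
  proof
    fix i show "y i = z i"
      using fun_cong[OF e, of i] y z unfolding hv_mem by (cases "i = n") auto
  qed
  ultimately show "y = z \<and> a = b" by simp
qed

lemma hv_card: "finite (hamming_vertices n q) \<and> card (hamming_vertices n q) = q ^ n"
proof (induction n)
  case 0 then show ?case by (simp add: hv_0)
next
  case (Suc n)
  have inj: "inj_on (\<lambda>(y,a). y(n:=a)) (hamming_vertices n q \<times> {..<q})"
    using hv_inj by (rule inj_on_subset) auto
  show ?case unfolding hv_Suc using Suc inj
    by (simp add: card_image card_cartesian_product)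
qed

lemma hv_finite: "finite (hamming_vertices n q)" using hv_card by blast


lemma card_Suc_split: "card {i\<in>{0..<Suc n}. P i} = card {i\<in>{0..<n}. P i} + (if P n then 1 else 0)"
proof -
  have "{i\<in>{0..<Suc n}. P i} = {i\<in>{0..<n}. P i} \<union> {i. i = n \<and> P i}" by auto
  moreover have "card {i. i = n \<and> P i} = (if P n then 1 else 0)"
  proof (cases "P n")
    case True then have "{i. i = n \<and> P i} = {n}" by auto
    then show ?thesis using True by simp
  qed auto
  moreover have "card ({i\<in>{0..<n}. P i} \<union> {i. i = n \<and> P i}) = card {i\<in>{0..<n}. P i} + card {i. i = n \<and> P i}"
    by (rule card_Un_disjoint) auto
  ultimately show ?thesis by simp
qed

lemma adj_Suc:
  assumes y: "y \<in> hamming_vertices n q" and z: "z \<in> hamming_vertices n q"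
  shows "hamming_adj (Suc n) (y(n:=a)) (z(n:=b)) \<longleftrightarrow> (a = b \<and> hamming_adj n y z) \<or> (a \<noteq> b \<and> y = z)"
proof -
  have eq: "{i\<in>{0..<n}. (y(n:=a)) i \<noteq> (z(n:=b)) i} = {i\<in>{0..<n}. y i \<noteq> z i}" by auto
  have c: "card {i\<in>{0..<Suc n}. (y(n:=a)) i \<noteq> (z(n:=b)) i} = card {i\<in>{0..<n}. y i \<noteq> z i} + (if a \<noteq> b then 1 else 0)"
    unfolding card_Suc_split eq by simp
  have yz: "y = z \<longleftrightarrow> {i\<in>{0..<n}. y i \<noteq> z i} = {}"
  proof
    assume "{i\<in>{0..<n}. y i \<noteq> z i} = {}"
    then have "\<forall>i<n. y i = z i" by auto
    then show "y = z" using y z unfolding hv_mem by (metis ext not_le)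
  qed auto
  show ?thesis unfolding hamming_adj_def c
    using yz by auto
qed

lemma nbr_Suc:
  assumes y: "y \<in> hamming_vertices n q" and a: "a < q"
  shows "{x\<in>hamming_vertices (Suc n) q. hamming_adj (Suc n) (y(n:=a)) x}
    = (\<lambda>z. z(n:=a)) ` {z\<in>hamming_vertices n q. hamming_adj n y z} \<union> (\<lambda>b. y(n:=b)) ` ({..<q} - {a})"
proof
  show "{x\<in>hamming_vertices (Suc n) q. hamming_adj (Suc n) (y(n:=a)) x}
    \<subseteq> (\<lambda>z. z(n:=a)) ` {z\<in>hamming_vertices n q. hamming_adj n y z} \<union> (\<lambda>b. y(n:=b)) ` ({..<q} - {a})"
  proof
    fix x assume x: "x \<in> {x\<in>hamming_vertices (Suc n) q. hamming_adj (Suc n) (y(n:=a)) x}"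
    define z where "z = x(n:=0)"
    have z: "z \<in> hamming_vertices n q" and xn: "x n < q" using hv_restrict[of x n q] x z_def by auto
    have xe: "x = z(n := x n)" unfolding z_def by simp
    have "hamming_adj (Suc n) (y(n:=a)) (z(n := x n))" using x xe by simp
    then have "(a = x n \<and> hamming_adj n y z) \<or> (a \<noteq> x n \<and> y = z)" using adj_Suc[OF y z] by simp
    then show "x \<in> (\<lambda>z. z(n:=a)) ` {z\<in>hamming_vertices n q. hamming_adj n y z} \<union> (\<lambda>b. y(n:=b)) ` ({..<q} - {a})"
    proof
      assume "a = x n \<and> hamming_adj n y z"
      then show ?thesis using xe z by auto
    next
      assume "a \<noteq> x n \<and> y = z"
      then show ?thesis using xe xn by auto
    qed
  qed
  show "(\<lambda>z. z(n:=a)) ` {z\<in>hamming_vertices n q. hamming_adj n y z} \<union> (\<lambda>b. y(n:=b)) ` ({..<q} - {a})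
     \<subseteq> {x\<in>hamming_vertices (Suc n) q. hamming_adj (Suc n) (y(n:=a)) x}"
    using adj_Suc[OF y] adj_Suc[OF y y] hv_upd[OF y] hv_upd a by auto
qed

lemma adjop_Suc:
  assumes y: "y \<in> hamming_vertices n q" and a: "a < q"
  shows "hamming_adj_op (Suc n) q f (y(n:=a)) =
     hamming_adj_op n q (\<lambda>z. f (z(n:=a))) y + (\<Sum>b<q. f (y(n:=b))) - f (y(n:=a))"
proof -
  let ?A = "(\<lambda>z. z(n:=a)) ` {z\<in>hamming_vertices n q. hamming_adj n y z}"
  let ?B = "(\<lambda>b. y(n:=b)) ` ({..<q} - {a})"
  have fA: "finite ?A" using hv_finite by auto
  have fB: "finite ?B" by auto
  have dis: "?A \<inter> ?B = {}"
  proof (rule ccontr)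
    assume "?A \<inter> ?B \<noteq> {}"
    then obtain x where x1: "x \<in> ?A" and x2: "x \<in> ?B" by blast
    from x1 obtain z where "x = z(n:=a)" by blast
    moreover from x2 obtain b where "x = y(n:=b)" "b \<noteq> a" by blast
    ultimately have e: "z(n:=a) = y(n:=b)" and "b \<noteq> a" by auto
    have "(z(n:=a)) n = (y(n:=b)) n" using e by (rule arg_cong)
    then show False using \<open>b \<noteq> a\<close> by simp
  qed
  have injA: "inj_on (\<lambda>z. z(n:=a)) {z\<in>hamming_vertices n q. hamming_adj n y z}"
  proof (rule inj_onI)
    fix z1 z2 assume "z1 \<in> {z\<in>hamming_vertices n q. hamming_adj n y z}" "z2 \<in> {z\<in>hamming_vertices n q. hamming_adj n y z}"
      "z1(n:=a) = z2(n:=a)"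
    then show "z1 = z2" using hv_inj[of n q] unfolding inj_on_def by auto
  qed
  have injB: "inj_on (\<lambda>b. y(n:=b)) ({..<q} - {a})"
    by (rule inj_onI) (metis fun_upd_same)
  have "hamming_adj_op (Suc n) q f (y(n:=a)) = sum f ?A + sum f ?B"
    unfolding hamming_adj_op_def nbr_Suc[OF y a] by (rule sum.union_disjoint[OF fA fB dis])
  also have "sum f ?A = hamming_adj_op n q (\<lambda>z. f (z(n:=a))) y"
    unfolding hamming_adj_op_def by (subst sum.reindex[OF injA]) (simp add: comp_def)
  also have "sum f ?B = (\<Sum>b\<in>{..<q} - {a}. f (y(n:=b)))"
    by (subst sum.reindex[OF injB]) (simp add: comp_def)
  also have "\<dots> = (\<Sum>b<q. f (y(n:=b))) - f (y(n:=a))"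
    using a by (subst sum_diff1) auto
  finally show ?thesis by (simp only: diff_add_eq add_diff_eq)
qed

lemma adjop_cong: "(\<And>z. z \<in> hamming_vertices n q \<Longrightarrow> F z = G z) \<Longrightarrow> hamming_adj_op n q F x = hamming_adj_op n q G x"
  unfolding hamming_adj_op_def by (rule sum.cong) auto

lemma adjop_diff: "hamming_adj_op n q (\<lambda>z. F z - G z) x = hamming_adj_op n q F x - hamming_adj_op n q G x"
  unfolding hamming_adj_op_def by (simp add: sum_subtractf)

lemma adjop_sum: "hamming_adj_op n q (\<lambda>z. \<Sum>b<m. F b z) x = (\<Sum>b<m. hamming_adj_op n q (F b) x)"
  unfolding hamming_adj_op_def by (rule sum.swap)

lemma adjop_0: "hamming_adj_op 0 q F x = 0"
  unfolding hamming_adj_op_def hamming_adj_def by simp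

definition eig :: "nat \<Rightarrow> nat \<Rightarrow> real \<Rightarrow> ((nat \<Rightarrow> nat) \<Rightarrow> real) \<Rightarrow> bool" where
  "eig n q \<mu> f \<longleftrightarrow> (\<forall>x\<in>hamming_vertices n q. hamming_adj_op n q f x = \<mu> * f x)"

lemma eig_restr:
  assumes "eig (Suc n) q \<mu> f" "y \<in> hamming_vertices n q" "a < q"
  shows "hamming_adj_op n q (\<lambda>z. f (z(n:=a))) y = (\<mu> + 1) * f (y(n:=a)) - (\<Sum>b<q. f (y(n:=b)))"
  using assms adjop_Suc[OF assms(2,3), of f] hv_upd[OF assms(2,3)] unfolding eig_def
  by (auto simp: algebra_simps)

lemma eig_diff:
  assumes "eig (Suc n) q \<mu> f" "a < q" "b < q"
  shows "eig n q (\<mu> + 1) (\<lambda>z. f (z(n:=a)) - f (z(n:=b)))"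
  unfolding eig_def adjop_diff
proof
  fix y assume y: "y \<in> hamming_vertices n q"
  show "hamming_adj_op n q (\<lambda>z. f (z(n:=a))) y - hamming_adj_op n q (\<lambda>z. f (z(n:=b))) y =
    (\<mu> + 1) * (f (y(n:=a)) - f (y(n:=b)))"
    unfolding eig_restr[OF assms(1) y assms(2)] eig_restr[OF assms(1) y assms(3)]
    by (simp add: right_diff_distrib)
qed

lemma eig_sum:
  assumes "eig (Suc n) q \<mu> f"
  shows "eig n q (\<mu> + 1 - real q) (\<lambda>z. \<Sum>b<q. f (z(n:=b)))"
  unfolding eig_def
proof
  fix y assume y: "y \<in> hamming_vertices n q"
  have "hamming_adj_op n q (\<lambda>z. \<Sum>b<q. f (z(n:=b))) y = (\<Sum>b<q. hamming_adj_op n q (\<lambda>z. f (z(n:=b))) y)"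
    by (rule adjop_sum)
  also have "\<dots> = (\<Sum>b<q. (\<mu> + 1) * f (y(n:=b)) - (\<Sum>b<q. f (y(n:=b))))"
    using eig_restr[OF assms y] by (intro sum.cong) auto
  also have "\<dots> = (\<mu> + 1 - real q) * (\<Sum>b<q. f (y(n:=b)))"
  proof -
    have "(\<Sum>b<q. (\<mu> + 1) * f (y(n:=b)) - (\<Sum>b<q. f (y(n:=b)))) =
       (\<mu> + 1) * (\<Sum>b<q. f (y(n:=b))) - real q * (\<Sum>b<q. f (y(n:=b)))"
      by (simp add: sum_subtractf sum_distrib_left)
    then show ?thesis by (simp add: left_diff_distrib)
  qed
  finally show "hamming_adj_op n q (\<lambda>z. \<Sum>b<q. f (z(n:=b))) y = (\<mu> + 1 - real q) * (\<Sum>b<q. f (y(n:=b)))" .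
qed


lemma eig_zero:
  assumes "0 < q"
  shows "eig n q \<mu> D \<Longrightarrow> \<mu> > real n * (real q - 1) \<Longrightarrow> \<forall>y\<in>hamming_vertices n q. D y = 0"
proof (induction n arbitrary: \<mu> D)
  case 0
  show ?case
  proof
    fix y assume "y \<in> hamming_vertices 0 q"
    then have "hamming_adj_op 0 q D y = \<mu> * D y" using 0(1) unfolding eig_def by blast
    then have "0 = \<mu> * D y" by (simp add: adjop_0)
    then show "D y = 0" using 0(2) by simp
  qed
next
  case (Suc n)
  have d0: "D (y(n:=a)) = D (y(n:=0))" if "a < q" "y \<in> hamming_vertices n q" for a y
  proof -
    have "eig n q (\<mu> + 1) (\<lambda>z. D (z(n:=a)) - D (z(n:=0)))" using eig_diff[OF Suc.prems(1) that(1) assms] .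
    moreover have "\<mu> + 1 > real n * (real q - 1)" using Suc.prems(2) assms by (simp add: algebra_simps)
    ultimately have "\<forall>y\<in>hamming_vertices n q. D (y(n:=a)) - D (y(n:=0)) = 0" by (rule Suc.IH)
    then show ?thesis using that(2) by simp
  qed
  define h where "h = (\<lambda>z. D (z(n:=0)))"
  have s: "(\<Sum>b<q. D (y(n:=b))) = real q * h y" if "y \<in> hamming_vertices n q" for y
  proof -
    have "(\<Sum>b<q. D (y(n:=b))) = (\<Sum>b<q. h y)" unfolding h_def
    proof (rule sum.cong)
      fix b assume "b \<in> {..<q}"
      then show "D (y(n:=b)) = D (y(n:=0))" using d0[of b y] that by blast
    qed simp
    then show ?thesis by simp
  qed
  have "eig n q (\<mu> + 1 - real q) h"
  proof -
    have e: "eig n q (\<mu> + 1 - real q) (\<lambda>z. \<Sum>b<q. D (z(n:=b)))" by (rule eig_sum[OF Suc.prems(1)])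
    show ?thesis unfolding eig_def
    proof
      fix y assume y: "y \<in> hamming_vertices n q"
      have "real q * hamming_adj_op n q h y = hamming_adj_op n q (\<lambda>z. real q * h z) y"
        unfolding hamming_adj_op_def by (simp add: sum_distrib_left)
      also have "\<dots> = hamming_adj_op n q (\<lambda>z. \<Sum>b<q. D (z(n:=b))) y"
        using s by (intro adjop_cong) auto
      also have "\<dots> = (\<mu> + 1 - real q) * (real q * h y)"
        using e y s[OF y] unfolding eig_def by simp
      finally have "real q * hamming_adj_op n q h y = real q * ((\<mu> + 1 - real q) * h y)" by simp
      then show "hamming_adj_op n q h y = (\<mu> + 1 - real q) * h y" using assms by simp
    qed
  qed
  moreover have "\<mu> + 1 - real q > real n * (real q - 1)" using Suc.prems(2) by (simp add: algebra_simps)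
  ultimately have h0: "\<forall>y\<in>hamming_vertices n q. h y = 0" by (rule Suc.IH)
  show ?case
  proof
    fix x assume x: "x \<in> hamming_vertices (Suc n) q"
    have "D x = D ((x(n:=0))(n := x n))" by simp
    also have "\<dots> = h (x(n:=0))" unfolding h_def using hv_restrict[OF x] by (intro d0) auto
    finally show "D x = 0" using h0 hv_restrict[OF x] by simp
  qed
qed


lemma eig_const:
  assumes "0 < q"
  shows "eig n q (real n * (real q - 1)) D \<Longrightarrow> \<exists>c. \<forall>y\<in>hamming_vertices n q. D y = c"
proof (induction n arbitrary: D)
  case 0
  show ?case by (rule exI[of _ "D (\<lambda>_. 0)"]) (simp add: hv_0)
next
  case (Suc n)
  let ?\<mu> = "real (Suc n) * (real q - 1)"
  have d0: "D (y(n:=a)) = D (y(n:=0))" if "a < q" "y \<in> hamming_vertices n q" for a y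
  proof -
    have "eig n q (?\<mu> + 1) (\<lambda>z. D (z(n:=a)) - D (z(n:=0)))" using eig_diff[OF Suc.prems(1) that(1) assms] .
    moreover have "?\<mu> + 1 > real n * (real q - 1)" using assms by (simp add: algebra_simps)
    ultimately have "\<forall>y\<in>hamming_vertices n q. D (y(n:=a)) - D (y(n:=0)) = 0" by (rule eig_zero[OF assms])
    then show ?thesis using that(2) by simp
  qed
  define h where "h = (\<lambda>z. D (z(n:=0)))"
  have s: "(\<Sum>b<q. D (y(n:=b))) = real q * h y" if "y \<in> hamming_vertices n q" for y
  proof -
    have "(\<Sum>b<q. D (y(n:=b))) = (\<Sum>b<q. h y)" unfolding h_def
    proof (rule sum.cong)
      fix b assume "b \<in> {..<q}"
      then show "D (y(n:=b)) = D (y(n:=0))" using d0[of b y] that by blast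
    qed simp
    then show ?thesis by simp
  qed
  have "eig n q (?\<mu> + 1 - real q) h"
  proof -
    have e: "eig n q (?\<mu> + 1 - real q) (\<lambda>z. \<Sum>b<q. D (z(n:=b)))" by (rule eig_sum[OF Suc.prems(1)])
    show ?thesis unfolding eig_def
    proof
      fix y assume y: "y \<in> hamming_vertices n q"
      have "real q * hamming_adj_op n q h y = hamming_adj_op n q (\<lambda>z. real q * h z) y"
        unfolding hamming_adj_op_def by (simp add: sum_distrib_left)
      also have "\<dots> = hamming_adj_op n q (\<lambda>z. \<Sum>b<q. D (z(n:=b))) y"
        using s by (intro adjop_cong) auto
      also have "\<dots> = (?\<mu> + 1 - real q) * (real q * h y)"
        using e y s[OF y] unfolding eig_def by simp
      finally have "real q * hamming_adj_op n q h y = real q * ((?\<mu> + 1 - real q) * h y)" by simp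
      then show "hamming_adj_op n q h y = (?\<mu> + 1 - real q) * h y" using assms by simp
    qed
  qed
  moreover have "?\<mu> + 1 - real q = real n * (real q - 1)" by (simp add: algebra_simps)
  ultimately have "eig n q (real n * (real q - 1)) h" by simp
  then obtain c where h0: "\<forall>y\<in>hamming_vertices n q. h y = c" using Suc.IH by blast
  show ?case
  proof (intro exI ballI)
    fix x assume x: "x \<in> hamming_vertices (Suc n) q"
    have "D x = D ((x(n:=0))(n := x n))" by simp
    also have "\<dots> = h (x(n:=0))" unfolding h_def using hv_restrict[OF x] by (intro d0) auto
    finally show "D x = c" using h0 hv_restrict[OF x] by simp
  qed
qed

lemma eig_lin:
  assumes "0 < q"
  shows "eig n q (real n * (real q - 1) - real q) f \<Longrightarrow>
    \<exists>g. (\<forall>i<n. (\<Sum>a<q. g i a) = 0) \<and> (\<forall>x\<in>hamming_vertices n q. f x = (\<Sum>i<n. g i (x i)))"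
proof (induction n arbitrary: f)
  case 0
  have "\<forall>x\<in>hamming_vertices 0 q. f x = 0"
  proof
    fix y assume "y \<in> hamming_vertices 0 q"
    then have "hamming_adj_op 0 q f y = (real 0 * (real q - 1) - real q) * f y" using 0 unfolding eig_def by blast
    then show "f y = 0" using assms by (simp add: adjop_0)
  qed
  then show ?case by (intro exI[of _ "\<lambda>_ _. 0"]) simp
next
  case (Suc n)
  let ?\<mu> = "real (Suc n) * (real q - 1) - real q"
  have m1: "?\<mu> + 1 = real n * (real q - 1)" by (simp add: algebra_simps)
  have "\<exists>c. \<forall>y\<in>hamming_vertices n q. f (y(n:=a)) - f (y(n:=0)) = c" if "a < q" for a
  proof -
    have "eig n q (?\<mu> + 1) (\<lambda>z. f (z(n:=a)) - f (z(n:=0)))" using eig_diff[OF Suc.prems(1) that assms] .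
    then show ?thesis unfolding m1 by (rule eig_const[OF assms])
  qed
  then obtain cc where cc: "\<And>a y. a < q \<Longrightarrow> y \<in> hamming_vertices n q \<Longrightarrow> f (y(n:=a)) - f (y(n:=0)) = cc a"
    by metis
  define S where "S = (\<lambda>z. \<Sum>b<q. f (z(n:=b)))"
  have "eig n q (?\<mu> + 1 - real q) S" unfolding S_def by (rule eig_sum[OF Suc.prems(1)])
  then have "eig n q (real n * (real q - 1) - real q) S" unfolding m1 .
  then obtain g where g0: "\<forall>i<n. (\<Sum>a<q. g i a) = 0" and gS: "\<forall>x\<in>hamming_vertices n q. S x = (\<Sum>i<n. g i (x i))"
    using Suc.IH by blast
  define C where "C = (\<Sum>a<q. cc a)"
  have Sf: "S y = real q * f (y(n:=0)) + C" if "y \<in> hamming_vertices n q" for y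
  proof -
    have "S y = (\<Sum>b<q. f (y(n:=0)) + cc b)" unfolding S_def
    proof (rule sum.cong)
      fix b assume "b \<in> {..<q}"
      then have "f (y(n:=b)) - f (y(n:=0)) = cc b" using cc[of b y] that by blast
      then show "f (y(n:=b)) = f (y(n:=0)) + cc b" by linarith
    qed simp
    then show ?thesis unfolding C_def by (simp add: sum.distrib)
  qed
  define g' where "g' = (\<lambda>i a. if i < n then g i a / real q else cc a - C / real q)"
  show ?case
  proof (intro exI conjI allI impI ballI)
    fix i assume i: "i < Suc n"
    show "(\<Sum>a<q. g' i a) = 0"
    proof (cases "i < n")
      case True
      then show ?thesis unfolding g'_def using g0 by (simp add: sum_divide_distrib[symmetric])
    next
      case False
      then have "(\<Sum>a<q. g' i a) = (\<Sum>a<q. cc a - C / real q)" unfolding g'_def by simp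
      also have "\<dots> = C - real q * (C / real q)" unfolding C_def by (simp add: sum_subtractf)
      also have "\<dots> = 0" using assms by simp
      finally show ?thesis .
    qed
  next
    fix x assume x: "x \<in> hamming_vertices (Suc n) q"
    define y where "y = x(n:=0)"
    have y: "y \<in> hamming_vertices n q" and xn: "x n < q" using hv_restrict[OF x] y_def by auto
    have "(\<Sum>i<Suc n. g' i (x i)) = (\<Sum>i<n. g' i (x i)) + g' n (x n)" by simp
    also have "(\<Sum>i<n. g' i (x i)) = (\<Sum>i<n. g i (y i) / real q)"
      by (rule sum.cong) (simp_all add: g'_def y_def)
    also have "g' n (x n) = cc (x n) - C / real q" by (simp add: g'_def)
    finally have "(\<Sum>i<Suc n. g' i (x i)) = (\<Sum>i<n. g i (y i) / real q) + (cc (x n) - C / real q)" .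
    also have "\<dots> = S y / real q + (cc (x n) - C / real q)"
      using gS y by (simp add: sum_divide_distrib)
    also have "\<dots> = f (y(n:=0)) + cc (x n)" unfolding Sf[OF y] using assms by (simp add: field_simps)
    also have "\<dots> = f (y(n:= x n))" using cc[OF xn y] by linarith
    also have "\<dots> = f x" unfolding y_def by simp
    finally show "f x = (\<Sum>i<Suc n. g' i (x i))" by simp
  qed
qed



lemma card_pairs_cols: "card {p\<in>{..<q}\<times>{..<(q::nat)}. P (fst p) (snd p)} = (\<Sum>a<q. card {b\<in>{..<q}. P a b})"
proof -
  have "{p\<in>{..<q}\<times>{..<q}. P (fst p) (snd p)} = Sigma {..<q} (\<lambda>a. {b\<in>{..<q}. P a b})" by auto
  then show ?thesis by (simp add: card_SigmaI)
qed

lemma card_pairs_rows: "card {p\<in>{..<q}\<times>{..<(q::nat)}. P (fst p) (snd p)} = (\<Sum>b<q. card {a\<in>{..<q}. P a b})"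
proof -
  have "{p\<in>{..<q}\<times>{..<q}. P (fst p) (snd p)} = (\<lambda>(b,a). (a,b)) ` Sigma {..<q} (\<lambda>b. {a\<in>{..<q}. P a b})" by auto
  moreover have "inj_on (\<lambda>(b,a). (a,b)) (Sigma {..<q} (\<lambda>b. {a\<in>{..<q}. P a b}))" by (auto simp: inj_on_def)
  ultimately show ?thesis by (simp add: card_image card_SigmaI)
qed

lemma card_le1_ex:
  assumes c: "card {a\<in>{..<q}. u a \<noteq> t} \<le> Suc 0" and q: "0 < (q::nat)"
  shows "\<exists>k<q. \<forall>a<q. a \<noteq> k \<longrightarrow> u a = t"
proof (cases "{a\<in>{..<q}. u a \<noteq> t} = {}")
  case True then show ?thesis using q by auto
next
  case False
  then obtain k where k: "k \<in> {a\<in>{..<q}. u a \<noteq> t}" by blast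
  have "\<forall>a\<in>{a\<in>{..<q}. u a \<noteq> t}. \<forall>b\<in>{a\<in>{..<q}. u a \<noteq> t}. a = b"
    using c by (subst card_le_Suc0_iff_eq[symmetric]) auto
  then show ?thesis using k by auto
qed

lemma card_ge2:
  assumes "\<not>(\<exists>\<alpha> k. k < q \<and> (\<forall>a<q. a \<noteq> k \<longrightarrow> u a = \<alpha>))" "0 < (q::nat)"
  shows "card {a\<in>{..<q}. u a \<noteq> t} \<ge> 2"
proof (rule ccontr)
  assume "\<not> card {a\<in>{..<q}. u a \<noteq> t} \<ge> 2"
  then have c: "card {a\<in>{..<q}. u a \<noteq> t} \<le> Suc 0" by simp
  show False using card_le1_ex[OF c assms(2)] assms(1) by blast
qed

lemma zs_struct:
  fixes u :: "nat \<Rightarrow> real"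
  assumes "(\<Sum>a<q. u a) = 0" "\<exists>a<q. u a \<noteq> 0" "k < q" "\<forall>a<q. a \<noteq> k \<longrightarrow> u a = \<alpha>"
  shows "\<alpha> \<noteq> u k" "u k + (real q - 1) * \<alpha> = 0"
proof -
  have "(\<Sum>a<q. u a) = u k + (\<Sum>a\<in>{..<q}-{k}. u a)" using assms(3) by (subst sum.remove) auto
  also have "(\<Sum>a\<in>{..<q}-{k}. u a) = (\<Sum>a\<in>{..<q}-{k}. \<alpha>)" using assms(4) by (intro sum.cong) auto
  also have "\<dots> = (real q - 1) * \<alpha>" using assms(3) by (simp add: of_nat_diff)
  finally show s: "u k + (real q - 1) * \<alpha> = 0" using assms(1) by simp
  show "\<alpha> \<noteq> u k"
  proof
    assume e: "\<alpha> = u k"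
    then have "real q * \<alpha> = 0" using s by (simp add: algebra_simps)
    then have "\<alpha> = 0" using assms(3) by simp
    then show False using assms(2,4) e by (metis)
  qed
qed

lemma zs_two:
  fixes u :: "nat \<Rightarrow> real"
  assumes "(\<Sum>a<q. u a) = 0" "\<exists>a<q. u a \<noteq> 0"
  shows "card {a\<in>{..<q}. u a \<noteq> 0} \<ge> 2"
proof (rule ccontr)
  assume "\<not> card {a\<in>{..<q}. u a \<noteq> 0} \<ge> 2"
  then have c: "card {a\<in>{..<q}. u a \<noteq> 0} \<le> Suc 0" by simp
  have q: "0 < q" using assms(2) by auto
  obtain k where k: "k < q" "\<forall>a<q. a \<noteq> k \<longrightarrow> u a = 0" using card_le1_ex[OF c q] by blast
  note z = zs_struct[OF assms k]
  show False using z by simp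
qed


lemma cnt_struct:
  fixes u :: "nat \<Rightarrow> real"
  assumes k: "k < q" and u: "\<forall>a<q. a \<noteq> k \<longrightarrow> u a = \<alpha>" "u k = \<beta>" and ab: "\<alpha> \<noteq> \<beta>"
  shows "card {a\<in>{..<q}. u a \<noteq> t} = (if t = \<alpha> then 1 else if t = \<beta> then q - 1 else q)"
proof -
  consider "t = \<alpha>" | "t \<noteq> \<alpha>" "t = \<beta>" | "t \<noteq> \<alpha>" "t \<noteq> \<beta>" by blast
  then show ?thesis
  proof cases
    case 1
    then have "{a\<in>{..<q}. u a \<noteq> t} = {k}" using k u ab by auto
    then show ?thesis using 1 by simp
  next
    case 2
    then have "{a\<in>{..<q}. u a \<noteq> t} = {..<q} - {k}" using k u ab by auto
    then show ?thesis using 2 k by simp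
  next
    case 3
    have "u a \<noteq> t" if "a < q" for a using 3 u that by (cases "a = k") auto
    then have "{a\<in>{..<q}. u a \<noteq> t} = {..<q}" by auto
    then show ?thesis using 3 by simp
  qed
qed

lemma count3:
  fixes u v :: "nat \<Rightarrow> real" and w :: real
  assumes q: "3 \<le> q" and k: "k < q" and u: "\<forall>a<q. a \<noteq> k \<longrightarrow> u a = \<alpha>" "u k = \<beta>" and ab: "\<alpha> \<noteq> \<beta>"
    and m: "m < q" and v: "\<forall>b<q. b \<noteq> m \<longrightarrow> v b = \<gamma>" "v m = \<delta>" and gd: "\<gamma> \<noteq> \<delta>"
  defines "N \<equiv> card {p\<in>{..<q}\<times>{..<q}. u (fst p) + v (snd p) \<noteq> w}"
  shows "N \<ge> 2 * (q - 1) \<and> (N = 2 * (q - 1) \<longrightarrow> \<alpha> + \<gamma> = w \<and> \<beta> + \<delta> = w)"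
proof -
  define r where "r = (\<lambda>t. card {a\<in>{..<q}. u a \<noteq> t})"
  have rr: "r t = (if t = \<alpha> then 1 else if t = \<beta> then q - 1 else q)" for t
    unfolding r_def by (rule cnt_struct[OF k u ab])
  have row: "card {a\<in>{..<q}. u a + v b \<noteq> w} = r (w - v b)" for b
    unfolding r_def by (rule arg_cong[where f=card]) auto
  have "N = (\<Sum>b<q. card {a\<in>{..<q}. u a + v b \<noteq> w})"
    unfolding N_def using card_pairs_rows[of q "\<lambda>a b. u a + v b \<noteq> w"] by simp
  also have "\<dots> = (\<Sum>b<q. r (w - v b))" using row by simp
  also have "\<dots> = r (w - v m) + (\<Sum>b\<in>{..<q}-{m}. r (w - v b))" using m by (subst sum.remove) auto
  also have "(\<Sum>b\<in>{..<q}-{m}. r (w - v b)) = (\<Sum>b\<in>{..<q}-{m}. r (w - \<gamma>))" using v by (intro sum.cong) auto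
  also have "\<dots> = (q - 1) * r (w - \<gamma>)" using m by simp
  finally have N: "N = r (w - \<delta>) + (q - 1) * r (w - \<gamma>)" using v by simp
  show ?thesis
  proof (cases "w - \<gamma> = \<alpha>")
    case True
    then have r1: "r (w - \<gamma>) = 1" using rr by simp
    have "w - \<delta> \<noteq> \<alpha>" using True gd by auto
    then have r2: "r (w - \<delta>) = (if w - \<delta> = \<beta> then q - 1 else q)" using rr by simp
    have "\<alpha> + \<gamma> = w" using True by simp
    moreover have "\<beta> + \<delta> = w" if "N = 2 * (q - 1)"
    proof (rule ccontr)
      assume "\<beta> + \<delta> \<noteq> w"
      then have "w - \<delta> \<noteq> \<beta>" by auto
      then have "N = q + (q - 1)" using N r1 r2 by simp
      then show False using that q by simp
    qed
    moreover have "N \<ge> 2 * (q - 1)" using N r1 r2 q by (auto split: if_splits)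
    ultimately show ?thesis by blast
  next
    case False
    then have r1: "r (w - \<gamma>) \<ge> q - 1" using rr by simp
    have q1: "q - 1 \<ge> 1" using q by simp
    have r2: "r (w - \<delta>) \<ge> 1" using rr[of "w - \<delta>"] q1 by (auto split: if_splits)
    have A: "(q - 1) * r (w - \<gamma>) \<ge> (q - 1) * (q - 1)" using r1 by (rule mult_le_mono2)
    have B: "(q - 1) * (q - 1) \<ge> (q - 1) * 2" using q by (intro mult_le_mono2) simp
    have "N \<ge> 2 * (q - 1) + 1" using N r2 A B by linarith
    then show ?thesis by simp
  qed
qed

lemma L2b:
  fixes u v :: "nat \<Rightarrow> real" and w :: real
  assumes q: "3 \<le> q"
    and u0: "(\<Sum>a<q. u a) = 0" "\<exists>a<q. u a \<noteq> 0"
    and v0: "(\<Sum>a<q. v a) = 0" "\<exists>a<q. v a \<noteq> 0"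
  defines "N \<equiv> card {p\<in>{..<q}\<times>{..<q}. u (fst p) + v (snd p) \<noteq> w}"
  shows "N \<ge> 2 * (q - 1) \<and> (N = 2 * (q - 1) \<longrightarrow>
    (\<exists>k m \<alpha> \<gamma>. k < q \<and> m < q \<and> \<alpha> \<noteq> u k \<and> \<gamma> \<noteq> v m \<and>
       (\<forall>a<q. a \<noteq> k \<longrightarrow> u a = \<alpha>) \<and> (\<forall>b<q. b \<noteq> m \<longrightarrow> v b = \<gamma>) \<and>
       \<alpha> + \<gamma> = w \<and> u k + v m = w))"
proof -
  have q0: "0 < q" using q by simp
  show ?thesis
  proof (cases "\<exists>\<alpha> k. k < q \<and> (\<forall>a<q. a \<noteq> k \<longrightarrow> u a = \<alpha>)")
    case False
    have "N = (\<Sum>b<q. card {a\<in>{..<q}. u a + v b \<noteq> w})"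
      unfolding N_def using card_pairs_rows[of q "\<lambda>a b. u a + v b \<noteq> w"] by simp
    also have "\<dots> = (\<Sum>b<q. card {a\<in>{..<q}. u a \<noteq> w - v b})"
      by (intro sum.cong refl arg_cong[where f=card]) auto
    also have "\<dots> \<ge> (\<Sum>b<q. 2)" using card_ge2[OF False q0] by (intro sum_mono) auto
    finally have "N \<ge> 2 * q" by simp
    then have "2 * (q - 1) < N" using q0 by linarith
    then show ?thesis by auto
  next
    case Tu: True
    show ?thesis
    proof (cases "\<exists>\<gamma> m. m < q \<and> (\<forall>b<q. b \<noteq> m \<longrightarrow> v b = \<gamma>)")
      case False
      have "N = (\<Sum>a<q. card {b\<in>{..<q}. u a + v b \<noteq> w})"
        unfolding N_def using card_pairs_cols[of q "\<lambda>a b. u a + v b \<noteq> w"] by simp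
      also have "\<dots> = (\<Sum>a<q. card {b\<in>{..<q}. v b \<noteq> w - u a})"
        by (intro sum.cong refl arg_cong[where f=card]) auto
      also have "\<dots> \<ge> (\<Sum>b<q. 2)" using card_ge2[OF False q0] by (intro sum_mono) auto
      finally have "N \<ge> 2 * q" by simp
      then have "2 * (q - 1) < N" using q0 by linarith
      then show ?thesis by auto
    next
      case True
      obtain \<alpha> k where k: "k < q" "\<forall>a<q. a \<noteq> k \<longrightarrow> u a = \<alpha>" using Tu by blast
      obtain \<gamma> m where m: "m < q" "\<forall>b<q. b \<noteq> m \<longrightarrow> v b = \<gamma>" using True by blast
      have ab: "\<alpha> \<noteq> u k" using zs_struct[OF u0 k] by simp
      have gd: "\<gamma> \<noteq> v m" using zs_struct[OF v0 m] by simp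
      have c3: "N \<ge> 2 * (q - 1) \<and> (N = 2 * (q - 1) \<longrightarrow> \<alpha> + \<gamma> = w \<and> u k + v m = w)"
        unfolding N_def by (rule count3[OF q k(1) k(2) refl ab m(1) m(2) refl gd])
      then show ?thesis using k m ab gd by blast
    qed
  qed
qed



lemma fiber:
  assumes ij: "i < n" "j < n" "i \<noteq> j"
  shows "card {x\<in>hamming_vertices n q. P x} =
    (\<Sum>z\<in>{z\<in>hamming_vertices n q. z i = 0 \<and> z j = 0}. card {p\<in>{..<q}\<times>{..<q}. P (z(i:=fst p, j:=snd p))})"
proof -
  let ?B = "{z\<in>hamming_vertices n q. z i = 0 \<and> z j = 0}"
  define \<phi> where "\<phi> = (\<lambda>(z::nat\<Rightarrow>nat,p::nat\<times>nat). z(i:=fst p, j:=snd p))"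
  let ?S = "Sigma ?B (\<lambda>z. {p\<in>{..<q}\<times>{..<q}. P (z(i:=fst p, j:=snd p))})"
  have img: "{x\<in>hamming_vertices n q. P x} = \<phi> ` ?S"
  proof
    show "{x\<in>hamming_vertices n q. P x} \<subseteq> \<phi> ` ?S"
    proof
      fix x assume x: "x \<in> {x\<in>hamming_vertices n q. P x}"
      have e: "x = \<phi> (x(i:=0,j:=0), (x i, x j))" unfolding \<phi>_def using ij by auto
      have "x(i:=0,j:=0) \<in> ?B" using x ij unfolding hv_mem by auto
      moreover have "(x i, x j) \<in> {p\<in>{..<q}\<times>{..<q}. P ((x(i:=0,j:=0))(i:=fst p, j:=snd p))}"
        using x ij e unfolding hv_mem \<phi>_def by auto
      ultimately show "x \<in> \<phi> ` ?S" using e by blast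
    qed
    show "\<phi> ` ?S \<subseteq> {x\<in>hamming_vertices n q. P x}"
      using ij unfolding \<phi>_def hv_mem by auto
  qed
  have inj: "inj_on \<phi> ?S"
  proof (rule inj_onI)
    fix s t assume s: "s \<in> ?S" and t: "t \<in> ?S" and e: "\<phi> s = \<phi> t"
    obtain z a b where s': "s = (z, a, b)" by (cases s) auto
    obtain z' a' b' where t': "t = (z', a', b')" by (cases t) auto
    have z: "z \<in> ?B" using s s' by auto
    have z': "z' \<in> ?B" using t t' by auto
    have e2: "z(i:=a, j:=b) = z'(i:=a', j:=b')" using e unfolding \<phi>_def s' t' by simp
    have "a = a'" using arg_cong[OF e2, of "\<lambda>f. f i"] ij by simp
    moreover have "b = b'" using arg_cong[OF e2, of "\<lambda>f. f j"] ij by simp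
    moreover have "z = z'"
    proof
      fix k show "z k = z' k"
        using arg_cong[OF e2, of "\<lambda>f. f k"] z z' by (cases "k = i"; cases "k = j") auto
    qed
    ultimately show "s = t" using s' t' by simp
  qed
  have fB: "finite ?B" using hv_finite by auto
  have "card {x\<in>hamming_vertices n q. P x} = card ?S" unfolding img by (rule card_image[OF inj])
  also have "\<dots> = (\<Sum>z\<in>?B. card {p\<in>{..<q}\<times>{..<q}. P (z(i:=fst p, j:=snd p))})"
    using fB by (subst card_SigmaI) auto
  finally show ?thesis .
qed

lemma sum_two:
  fixes h :: "nat \<Rightarrow> 'b::comm_monoid_add"
  assumes "i < (n::nat)" "j < n" "i \<noteq> j"
  shows "(\<Sum>k<n. h k) = h i + h j + (\<Sum>k\<in>{..<n}-{i}-{j}. h k)"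
proof -
  have "(\<Sum>k<n. h k) = h i + (\<Sum>k\<in>{..<n}-{i}. h k)" using assms by (intro sum.remove) auto
  also have "(\<Sum>k\<in>{..<n}-{i}. h k) = h j + (\<Sum>k\<in>{..<n}-{i}-{j}. h k)" using assms by (intro sum.remove) auto
  finally show ?thesis by (simp add: add.assoc)
qed

lemma sum_upd2:
  fixes g :: "nat \<Rightarrow> nat \<Rightarrow> real"
  assumes "i < n" "j < n" "i \<noteq> j"
  shows "(\<Sum>k<n. g k ((x(i:=a, j:=b)) k)) = (\<Sum>k<n. g k (x k)) - g i (x i) - g j (x j) + g i a + g j b"
proof -
  have "(\<Sum>k\<in>{..<n}-{i}-{j}. g k ((x(i:=a, j:=b)) k)) = (\<Sum>k\<in>{..<n}-{i}-{j}. g k (x k))"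
    by (intro sum.cong) auto
  then show ?thesis
    using sum_two[OF assms, of "\<lambda>k. g k ((x(i:=a, j:=b)) k)"] sum_two[OF assms, of "\<lambda>k. g k (x k)"] assms
    by simp
qed


lemma card_B:
  assumes ij: "i < n" "j < n" "i \<noteq> j" and q: "0 < q"
  shows "card {z\<in>hamming_vertices n q. z i = 0 \<and> z j = 0} = q ^ (n - 2)"
proof -
  let ?B = "{z\<in>hamming_vertices n q. z i = 0 \<and> z j = 0}"
  have "q ^ n = card {x\<in>hamming_vertices n q. True}" using hv_card by simp
  also have "\<dots> = (\<Sum>z\<in>?B. card ({..<q}\<times>{..<q}))" using fiber[OF ij, of q "\<lambda>_. True"] by simp
  also have "\<dots> = card ?B * (q * q)" by (simp add: card_cartesian_product)
  finally have e: "q ^ (n - 2) * (q * q) = card ?B * (q * q)"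
  proof -
    assume "q ^ n = card ?B * (q * q)"
    moreover have "q ^ n = q ^ (n - 2) * (q * q)"
    proof -
      have "n = (n - 2) + 2" using ij by auto
      then have "q ^ n = q ^ (n - 2) * q ^ 2" by (metis power_add)
      then show ?thesis by (simp add: power2_eq_square)
    qed
    ultimately show ?thesis by simp
  qed
  then show ?thesis using q by simp
qed

theorem theorem3:
  fixes n q :: nat and f :: "(nat \<Rightarrow> nat) \<Rightarrow> real"
  assumes "q > 2" and "n \<ge> 2"
    and nonzero: "\<exists>x\<in>hamming_vertices n q. f x \<noteq> 0"
    and eigen: "\<forall>x\<in>hamming_vertices n q.
                  hamming_adj_op n q f x = (real n * (real q - 1) - real q) * f x"
  shows "card (support_H n q f) \<ge> 2 * (q - 1) * q ^ (n - 2) \<and>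
         (card (support_H n q f) = 2 * (q - 1) * q ^ (n - 2) \<longrightarrow>
         (\<exists>i<n. \<exists>j<n. i \<noteq> j \<and> (\<exists>k<q. \<exists>m<q. \<exists>c::real. c \<noteq> 0 \<and>
            (\<forall>x\<in>hamming_vertices n q.
               f x = (if x \<in> T_set q k i n - T_set q m j n then c
                      else if x \<in> T_set q m j n - T_set q k i n then - c
                      else 0)))))"
proof -
  have q0: "0 < q" and q3: "3 \<le> q" using assms(1) by auto
  obtain g where g0: "\<forall>i<n. (\<Sum>a<q. g i a) = 0" and gf: "\<forall>x\<in>hamming_vertices n q. f x = (\<Sum>i<n. g i (x i))"
    using eig_lin[OF q0] eigen unfolding eig_def by blast
  have "\<exists>i<n. \<exists>a<q. g i a \<noteq> 0"
  proof (rule ccontr)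
    assume "\<not> ?thesis"
    then have "f x = 0" if "x \<in> hamming_vertices n q" for x
    proof -
      have "f x = (\<Sum>i<n. g i (x i))" using gf that by blast
      also have "\<dots> = 0" using \<open>\<not> (\<exists>i<n. \<exists>a<q. g i a \<noteq> 0)\<close> that unfolding hv_mem
        by (intro sum.neutral) auto
      finally show ?thesis .
    qed
    then show False using nonzero by blast
  qed
  then obtain i where i: "i < n" and ui: "\<exists>a<q. g i a \<noteq> 0" by blast
  let ?S = "support_H n q f"
  have S_def: "?S = {x\<in>hamming_vertices n q. f x \<noteq> 0}" unfolding support_H_def ..
  show ?thesis
  proof (cases "\<exists>j<n. j \<noteq> i \<and> (\<exists>b<q. g j b \<noteq> 0)")
    case False
    define j :: nat where "j = (if i = 0 then 1 else 0)"
    have j: "j < n" "i \<noteq> j" unfolding j_def using i assms(2) by auto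
    let ?B = "{z\<in>hamming_vertices n q. z i = 0 \<and> z j = 0}"
    have fi: "f x = g i (x i)" if x: "x \<in> hamming_vertices n q" for x
    proof -
      have "f x = (\<Sum>k<n. g k (x k))" using gf x by blast
      also have "\<dots> = g i (x i) + (\<Sum>k\<in>{..<n}-{i}. g k (x k))" using i by (intro sum.remove) auto
      also have "(\<Sum>k\<in>{..<n}-{i}. g k (x k)) = 0"
        using False x unfolding hv_mem by (intro sum.neutral) auto
      finally show ?thesis by simp
    qed
    have "card ?S = (\<Sum>z\<in>?B. card {p\<in>{..<q}\<times>{..<q}. f (z(i:=fst p, j:=snd p)) \<noteq> 0})"
      unfolding S_def by (rule fiber[OF i j(1) j(2)])
    also have "\<dots> = (\<Sum>z\<in>?B. card {p\<in>{..<q}\<times>{..<q}. g i (fst p) \<noteq> 0})"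
    proof (rule sum.cong[OF refl], rule arg_cong[where f=card], rule Collect_cong)
      fix z p assume z: "z \<in> ?B"
      show "(p \<in> {..<q}\<times>{..<q} \<and> f (z(i:=fst p, j:=snd p)) \<noteq> 0) = (p \<in> {..<q}\<times>{..<q} \<and> g i (fst p) \<noteq> 0)"
      proof (cases "p \<in> {..<q}\<times>{..<q}")
        case True
        have "z(i:=fst p, j:=snd p) \<in> hamming_vertices n q" using z True i j unfolding hv_mem by auto
        then show ?thesis using fi j by auto
      qed simp
    qed
    also have "\<dots> = (\<Sum>z\<in>?B. q * card {a\<in>{..<q}. g i a \<noteq> 0})"
      using card_pairs_rows[of q "\<lambda>a b. g i a \<noteq> 0"] by simp
    also have "\<dots> = card ?B * (q * card {a\<in>{..<q}. g i a \<noteq> 0})" by simp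
    also have "\<dots> \<ge> card ?B * (q * 2)" using zs_two[OF g0[rule_format, OF i] ui] by simp
    finally have ge: "card ?S \<ge> q ^ (n - 2) * (q * 2)" using card_B[OF i j(1) j(2) q0] by simp
    have h1: "q ^ (n - 2) * (2 * (q - 1)) < q ^ (n - 2) * (q * 2)" using q0 by simp
    have lt: "2 * (q - 1) * q ^ (n - 2) < q ^ (n - 2) * (q * 2)" using h1 by (simp add: mult.commute)
    have "2 * (q - 1) * q ^ (n - 2) < card ?S" by (rule less_le_trans[OF lt ge])
    then show ?thesis by simp
  next
    case True
    then obtain j where j: "j < n" "j \<noteq> i" and vj: "\<exists>b<q. g j b \<noteq> 0" by blast
    have ij: "i \<noteq> j" using j by simp
    let ?B = "{z\<in>hamming_vertices n q. z i = 0 \<and> z j = 0}"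
    define u where "u = g i"
    define v where "v = g j"
    define c where "c = (\<lambda>z. (\<Sum>k<n. g k (z k)) - g i 0 - g j 0)"
    have u0: "(\<Sum>a<q. u a) = 0" "\<exists>a<q. u a \<noteq> 0" using g0 i ui unfolding u_def by auto
    have v0: "(\<Sum>a<q. v a) = 0" "\<exists>a<q. v a \<noteq> 0" using g0 j vj unfolding v_def by auto
    have fz: "f (z(i:=a, j:=b)) = u a + v b + c z" if z: "z \<in> ?B" and ab: "a < q" "b < q" for z a b
    proof -
      have "z(i:=a, j:=b) \<in> hamming_vertices n q" using z ab i j unfolding hv_mem by auto
      then have "f (z(i:=a, j:=b)) = (\<Sum>k<n. g k ((z(i:=a, j:=b)) k))" using gf by blast
      also have "\<dots> = (\<Sum>k<n. g k (z k)) - g i (z i) - g j (z j) + g i a + g j b"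
        by (rule sum_upd2[OF i j(1) ij])
      finally show ?thesis using z unfolding u_def v_def c_def by simp
    qed
    define F where "F = (\<lambda>z. card {p\<in>{..<q}\<times>{..<q}. u (fst p) + v (snd p) \<noteq> - c z})"
    have cS: "card ?S = (\<Sum>z\<in>?B. F z)"
    proof -
      have "card ?S = (\<Sum>z\<in>?B. card {p\<in>{..<q}\<times>{..<q}. f (z(i:=fst p, j:=snd p)) \<noteq> 0})"
        unfolding S_def by (rule fiber[OF i j(1) ij])
      also have "\<dots> = (\<Sum>z\<in>?B. F z)" unfolding F_def
      proof (rule sum.cong[OF refl], rule arg_cong[where f=card], rule Collect_cong)
        fix z p assume z: "z \<in> ?B"
        show "(p \<in> {..<q}\<times>{..<q} \<and> f (z(i:=fst p, j:=snd p)) \<noteq> 0) = (p \<in> {..<q}\<times>{..<q} \<and> u (fst p) + v (snd p) \<noteq> - c z)"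
        proof (cases "p \<in> {..<q}\<times>{..<q}")
          case True
          then show ?thesis using fz[OF z, of "fst p" "snd p"] by auto
        qed simp
      qed
      finally show ?thesis .
    qed
    have Fge: "F z \<ge> 2 * (q - 1)" for z
      unfolding F_def using L2b[OF q3 u0 v0, of "- c z"] by blast
    have cB: "card ?B = q ^ (n - 2)" by (rule card_B[OF i j(1) ij q0])
    have "card ?S \<ge> (\<Sum>z\<in>?B. 2 * (q - 1))" unfolding cS using Fge by (intro sum_mono) auto
    then have ge: "card ?S \<ge> 2 * (q - 1) * q ^ (n - 2)" using cB by (simp add: mult.commute)
    have eqc: "\<exists>i<n. \<exists>j<n. i \<noteq> j \<and> (\<exists>k<q. \<exists>m<q. \<exists>c::real. c \<noteq> 0 \<and>
            (\<forall>x\<in>hamming_vertices n q.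
               f x = (if x \<in> T_set q k i n - T_set q m j n then c
                      else if x \<in> T_set q m j n - T_set q k i n then - c
                      else 0)))"
      if eq: "card ?S = 2 * (q - 1) * q ^ (n - 2)"
    proof -
      have fB: "finite ?B" using hv_finite by auto
      have Feq: "F z = 2 * (q - 1)" if z: "z \<in> ?B" for z
      proof (rule ccontr)
        assume "F z \<noteq> 2 * (q - 1)"
        then have "2 * (q - 1) < F z" using Fge[of z] by simp
        then have "(\<Sum>z\<in>?B. 2 * (q - 1)) < (\<Sum>z\<in>?B. F z)"
          using fB z Fge by (intro sum_strict_mono_ex1) auto
        then show False using eq cS cB by (simp add: mult.commute)
      qed
      have z0: "(\<lambda>_. 0) \<in> ?B" unfolding hv_mem using q0 by simp
      obtain k m \<alpha> \<gamma> where km: "k < q" "m < q" and ak: "\<alpha> \<noteq> u k" and gm: "\<gamma> \<noteq> v m"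
        and ua: "\<forall>a<q. a \<noteq> k \<longrightarrow> u a = \<alpha>" and vb: "\<forall>b<q. b \<noteq> m \<longrightarrow> v b = \<gamma>"
        and w1: "\<alpha> + \<gamma> = - c (\<lambda>_. 0)" and w2: "u k + v m = - c (\<lambda>_. 0)"
        using L2b[OF q3 u0 v0, of "- c (\<lambda>_. 0)"] Feq[OF z0] unfolding F_def by blast
      have cz: "c z = - (\<alpha> + \<gamma>)" if z: "z \<in> ?B" for z
        using count3[OF q3 km(1) ua refl ak km(2) vb refl gm, of "- c z"] Feq[OF z] unfolding F_def by simp
      have s1: "u k + (real q - 1) * \<alpha> = 0" using zs_struct(2)[OF u0 km(1) ua] .
      have s2: "v m + (real q - 1) * \<gamma> = 0" using zs_struct(2)[OF v0 km(2) vb] .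
      have ag: "\<alpha> + \<gamma> = 0"
      proof -
        have "real q * (\<alpha> + \<gamma>) = (\<alpha> + \<gamma>) + (real q - 1) * \<alpha> + (real q - 1) * \<gamma>"
          by (simp add: algebra_simps)
        also have "\<dots> = (u k + v m) + (real q - 1) * \<alpha> + (real q - 1) * \<gamma>" using w1 w2 by simp
        also have "\<dots> = 0" using s1 s2 by linarith
        finally show ?thesis using q0 by simp
      qed
      have a0: "\<alpha> \<noteq> 0" using ak s1 by auto
      define cc where "cc = - real q * \<alpha>"
      have cc0: "cc \<noteq> 0" unfolding cc_def using a0 q0 by simp
      show ?thesis
      proof (intro exI conjI impI allI ballI)
        show "i < n" "j < n" "i \<noteq> j" "k < q" "m < q" "cc \<noteq> 0" using i j ij km cc0 by auto
      next
        fix x assume x: "x \<in> hamming_vertices n q"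
        define z where "z = x(i:=0, j:=0)"
        have z: "z \<in> ?B" using x i j ij unfolding z_def hv_mem by auto
        have xq: "x i < q" "x j < q" using x i j unfolding hv_mem by auto
        have "x = z(i:= x i, j:= x j)" unfolding z_def using ij by auto
        then have "f x = u (x i) + v (x j) + c z" using fz[OF z xq] by simp
        then have fx: "f x = u (x i) + v (x j)" using cz[OF z] ag by simp
        have Tk: "x \<in> T_set q k i n \<longleftrightarrow> x i = k" and Tm: "x \<in> T_set q m j n \<longleftrightarrow> x j = m"
          using x unfolding T_set_def by auto
        show "f x = (if x \<in> T_set q k i n - T_set q m j n then cc
                      else if x \<in> T_set q m j n - T_set q k i n then - cc else 0)"
        proof (cases "x i = k"; cases "x j = m")
          assume "x i = k" "x j = m"
          then show ?thesis using fx Tk Tm w2 w1 ag by simp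
        next
          assume "x i = k" "x j \<noteq> m"
          then have "f x = u k + \<gamma>" using fx vb xq by simp
          then show ?thesis using \<open>x i = k\<close> \<open>x j \<noteq> m\<close> Tk Tm s1 ag unfolding cc_def by (simp add: algebra_simps)
        next
          assume "x i \<noteq> k" "x j = m"
          then have "f x = \<alpha> + v m" using fx ua xq by simp
          moreover have "v m = - ((real q - 1) * \<gamma>)" using s2 by linarith
          moreover have "\<gamma> = - \<alpha>" using ag by linarith
          ultimately have "f x = real q * \<alpha>" by (simp add: algebra_simps)
          then show ?thesis using \<open>x i \<noteq> k\<close> \<open>x j = m\<close> Tk Tm unfolding cc_def by simp
        next
          assume "x i \<noteq> k" "x j \<noteq> m"
          then have "f x = \<alpha> + \<gamma>" using fx ua vb xq by simp
          then show ?thesis using \<open>x i \<noteq> k\<close> \<open>x j \<noteq> m\<close> Tk Tm ag by simp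
        qed
      qed
    qed
    show ?thesis using ge eqc by blast
  qed
qed

end
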